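(* Let $(E,\tau)$ be a convex space. Then $(E,\tau)$ is uniquely generated if and only if for all $X,Y\subseteq E$, $\tau(X)=\tau(Y)$ implies $\tau(X\cap Y)=\tau(X)=\tau(Y)$.
   Context: $E$ is a finite set and $\tau:2^E\to 2^E$. $(E,\tau)$ is a convex space if (C1) $X\subseteq\tau(X)$ for all $X\subseteq E$, and (convexity) for all $X\subseteq Y\subseteq Z\subseteq E$ with $\tau(X)=\tau(Z)$ we have $\tau(Y)=\tau(X)$. For $X\subseteq E$, a generator of $X$ is any $B\subseteq E$ with $\tau(B)=\tau(X)$; a basis of $X$ is an inclusion-minimal generator of $X$. The space is uniquely generated if every $X\subseteq E$ has exactly one basis. *)

theory Defs
  imports Main
begin

definition convex_space :: "'a set \<Rightarrow> ('a set \<Rightarrow> 'a set) \<Rightarrow> bool" where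
  "convex_space E \<tau> \<longleftrightarrow> finite E \<and> (\<forall>X. X \<subseteq> E \<longrightarrow> \<tau> X \<subseteq> E) \<and>
     (\<forall>X. X \<subseteq> E \<longrightarrow> X \<subseteq> \<tau> X) \<and>
     (\<forall>X Y Z. X \<subseteq> Y \<and> Y \<subseteq> Z \<and> Z \<subseteq> E \<and> \<tau> X = \<tau> Z \<longrightarrow> \<tau> Y = \<tau> X)"

definition is_generator :: "'a set \<Rightarrow> ('a set \<Rightarrow> 'a set) \<Rightarrow> 'a set \<Rightarrow> 'a set \<Rightarrow> bool" where
  "is_generator E \<tau> X B \<longleftrightarrow> B \<subseteq> E \<and> \<tau> B = \<tau> X"

definition is_basis :: "'a set \<Rightarrow> ('a set \<Rightarrow> 'a set) \<Rightarrow> 'a set \<Rightarrow> 'a set \<Rightarrow> bool" where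
  "is_basis E \<tau> X B \<longleftrightarrow> is_generator E \<tau> X B \<and>
     (\<forall>C. C \<subseteq> B \<and> is_generator E \<tau> X C \<longrightarrow> C = B)"

definition uniquely_generated :: "'a set \<Rightarrow> ('a set \<Rightarrow> 'a set) \<Rightarrow> bool" where
  "uniquely_generated E \<tau> \<longleftrightarrow> (\<forall>X. X \<subseteq> E \<longrightarrow> (\<exists>!B. is_basis E \<tau> X B))"

end

theory Submission
  imports Defs
begin

lemma min_gen:
  assumes "finite E" "G \<subseteq> E"
  shows "\<exists>C. C \<subseteq> G \<and> \<tau> C = \<tau> G \<and> (\<forall>D. D \<subseteq> C \<and> \<tau> D = \<tau> G \<longrightarrow> D = C)"
proof -
  let ?A = "{C. C \<subseteq> G \<and> \<tau> C = \<tau> G}"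
  have fin: "finite ?A"
    by (rule finite_subset[of _ "Pow G"]) (use assms finite_subset in auto)
  have "G \<in> ?A" by simp
  from finite_has_minimal2[OF fin this] obtain m where
    "m \<in> ?A" "\<forall>b\<in>?A. b \<subseteq> m \<longrightarrow> m = b" by blast
  then show ?thesis by (intro exI[of _ m]) auto
qed

theorem mainTheorem8:
  assumes "convex_space E \<tau>"
  shows "uniquely_generated E \<tau> \<longleftrightarrow>
    (\<forall>X Y. X \<subseteq> E \<and> Y \<subseteq> E \<and> \<tau> X = \<tau> Y \<longrightarrow> \<tau> (X \<inter> Y) = \<tau> X \<and> \<tau> X = \<tau> Y)"
proof
  have finE: "finite E" using assms unfolding convex_space_def by simp
  have cvx: "\<tau> Y = \<tau> X" if "X \<subseteq> Y" "Y \<subseteq> Z" "Z \<subseteq> E" "\<tau> X = \<tau> Z" for X Y Z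
  proof -
    have "\<forall>X Y Z. X \<subseteq> Y \<and> Y \<subseteq> Z \<and> Z \<subseteq> E \<and> \<tau> X = \<tau> Z \<longrightarrow> \<tau> Y = \<tau> X"
      using assms unfolding convex_space_def by (elim conjE)
    then show ?thesis using that by blast
  qed
  {
    assume U: "uniquely_generated E \<tau>"
    show "\<forall>X Y. X \<subseteq> E \<and> Y \<subseteq> E \<and> \<tau> X = \<tau> Y \<longrightarrow> \<tau> (X \<inter> Y) = \<tau> X \<and> \<tau> X = \<tau> Y"
    proof (intro allI impI)
      fix X Y assume h: "X \<subseteq> E \<and> Y \<subseteq> E \<and> \<tau> X = \<tau> Y"
      have sub: "\<exists>B. B \<subseteq> G \<and> is_basis E \<tau> X B" if G: "G \<subseteq> E" "\<tau> G = \<tau> X" for G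
      proof -
        obtain C where C: "C \<subseteq> G" "\<tau> C = \<tau> G" "\<forall>D. D \<subseteq> C \<and> \<tau> D = \<tau> G \<longrightarrow> D = C"
          using min_gen[OF finE G(1), of \<tau>] by blast
        have "is_basis E \<tau> X C" unfolding is_basis_def is_generator_def
          using C G by (metis order_trans)
        with C show ?thesis by blast
      qed
      from sub[of X] h obtain B1 where B1: "B1 \<subseteq> X" "is_basis E \<tau> X B1" by auto
      from sub[of Y] h obtain B2 where B2: "B2 \<subseteq> Y" "is_basis E \<tau> X B2" by auto
      have "\<exists>!B. is_basis E \<tau> X B" using U h unfolding uniquely_generated_def by simp
      hence "B1 = B2" using B1(2) B2(2) by (metis)
      hence "B1 \<subseteq> X \<inter> Y" using B1 B2 by auto
      moreover have "\<tau> B1 = \<tau> X" using B1 unfolding is_basis_def is_generator_def by auto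
      moreover have "X \<inter> Y \<subseteq> X" "X \<subseteq> E" using h by auto
      ultimately have "\<tau> (X \<inter> Y) = \<tau> B1" using cvx[of B1 "X \<inter> Y" X] by blast
      then show "\<tau> (X \<inter> Y) = \<tau> X \<and> \<tau> X = \<tau> Y" using \<open>\<tau> B1 = \<tau> X\<close> h by auto
    qed
  }
  {
    assume I: "\<forall>X Y. X \<subseteq> E \<and> Y \<subseteq> E \<and> \<tau> X = \<tau> Y \<longrightarrow> \<tau> (X \<inter> Y) = \<tau> X \<and> \<tau> X = \<tau> Y"
    show "uniquely_generated E \<tau>"
      unfolding uniquely_generated_def
    proof (intro allI impI)
      fix X assume X: "X \<subseteq> E"
      obtain C where C: "C \<subseteq> X" "\<tau> C = \<tau> X" "\<forall>D. D \<subseteq> C \<and> \<tau> D = \<tau> X \<longrightarrow> D = C"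
        using min_gen[OF finE X, of \<tau>] by blast
      have b: "is_basis E \<tau> X C" unfolding is_basis_def is_generator_def
        using C X by (metis order_trans)
      show "\<exists>!B. is_basis E \<tau> X B"
      proof (rule ex1I[where P="is_basis E \<tau> X", OF b])
        fix B assume B: "is_basis E \<tau> X B"
        have BE: "B \<subseteq> E" "\<tau> B = \<tau> X" using B unfolding is_basis_def is_generator_def by auto
        have CE: "C \<subseteq> E" using C X by auto
        have "\<tau> (B \<inter> C) = \<tau> B" using I BE CE C(2) by simp
        hence "\<tau> (B \<inter> C) = \<tau> X" using BE by simp
        hence "B \<inter> C = B" using B CE BE unfolding is_basis_def is_generator_def by (meson Int_lower1 le_infI2)
        moreover have "B \<inter> C = C" using C(3) \<open>\<tau> (B \<inter> C) = \<tau> X\<close> by (meson Int_lower2)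
        ultimately show "B = C" by simp
      qed
    qed
  }
qed

end
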